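(* Let the unit segment be fixed in the plane. A real number $r$ is RA-constructible if and only if $r$ can be obtained from $1$ by finitely many applications of the field operations $+,-,\times,\div$ (division by nonzero numbers), of $x\mapsto\sqrt{x}$ applied to previously obtained positive reals $x$, and of $x\mapsto\sin(\pi x)$ applied to previously obtained reals $x$. Likewise, a real number $r$ is RRA-constructible if and only if $r$ can be obtained from $1$ by finitely many applications of the field operations, of $x\mapsto\sqrt{x}$ applied to previously obtained positive reals $x$, and of $x\mapsto\frac{1}{\pi}\arcsin(x)$ applied to previously obtained reals $x$ with $|x|\le 1$.
   Context: Constructions take place in the Euclidean plane, starting from a segment declared to have length $1$ (it fixes Cartesian coordinates: the origin at one endpoint, the horizontal axis along the segment). The available tools are the straightedge (draw the line through two constructed points), the compass (draw the circle with a constructed center through a constructed point) and intersection of constructed lines/circles, together with one additional tool: - the right anglesector (RA): given two constructed segments of lengths $p,q$, it divides the right angle in the ratio $p:q$, i.e. produces the ray at angle $\frac{p}{q}\cdot\frac{\pi}{2}$ inside a given constructed right angle (for $p\le q$); - the reverse right anglesector (RRA): given a constructed acute angle $\theta$ inside a constructed right angle and a constructed segment, it divides that segment in the ratio $\theta:\frac{\pi}{2}$ (i.e. produces the point at fraction $\frac{2\theta}{\pi}$ of its length). A real number is RA-constructible (resp. RRA-constructible) if its absolute value is the length of a segment constructible from the unit segment with straightedge, compass and the RA (resp. RRA) tool. *)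

theory Defs
  imports Complex_Main
begin

text \<open>Points of the Euclidean plane are complex numbers; the unit segment is
  the segment from 0 to 1 (origin at one endpoint, real axis along it).\<close>

datatype tool = RA_tool | RRA_tool

definition on_line :: "complex \<Rightarrow> complex \<Rightarrow> complex \<Rightarrow> bool" where
  "on_line a b z \<longleftrightarrow> (\<exists>t::real. z = a + of_real t * (b - a))"

definition on_circle :: "complex \<Rightarrow> complex \<Rightarrow> complex \<Rightarrow> bool" where
  "on_circle c d z \<longleftrightarrow> cmod (z - c) = cmod (d - c)"

definition right_angle :: "complex \<Rightarrow> complex \<Rightarrow> complex \<Rightarrow> bool" where
  "right_angle V A B \<longleftrightarrow> A \<noteq> V \<and> B \<noteq> V \<and> Re ((A - V) * cnj (B - V)) = 0"

definition angle_at :: "complex \<Rightarrow> complex \<Rightarrow> complex \<Rightarrow> real" where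
  "angle_at V A C = arccos (Re ((C - V) * cnj (A - V)) / (cmod (C - V) * cmod (A - V)))"

text \<open>The point on the ray inside the right angle AOB making angle th with OA,
  at distance |VA| from V.\<close>
definition ray_point :: "complex \<Rightarrow> complex \<Rightarrow> complex \<Rightarrow> real \<Rightarrow> complex" where
  "ray_point V A B th = V + of_real (cos th) * (A - V)
      + of_real (sin th * cmod (A - V) / cmod (B - V)) * (B - V)"

inductive constr :: "tool \<Rightarrow> complex \<Rightarrow> bool" for T :: tool where
  zero: "constr T 0"
| one: "constr T 1"
| line_line: "\<lbrakk>constr T a; constr T b; constr T c; constr T d; a \<noteq> b; c \<noteq> d;
     \<not> (on_line a b c \<and> on_line a b d); on_line a b z; on_line c d z\<rbrakk> \<Longrightarrow> constr T z"
| line_circle: "\<lbrakk>constr T a; constr T b; constr T c; constr T d; a \<noteq> b; c \<noteq> d;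
     on_line a b z; on_circle c d z\<rbrakk> \<Longrightarrow> constr T z"
| circle_circle: "\<lbrakk>constr T c; constr T d; constr T c'; constr T d'; c \<noteq> d; c' \<noteq> d';
     c \<noteq> c' \<or> cmod (d - c) \<noteq> cmod (d' - c'); on_circle c d z; on_circle c' d' z\<rbrakk>
     \<Longrightarrow> constr T z"
| RA: "\<lbrakk>T = RA_tool; constr T V; constr T A; constr T B; right_angle V A B;
     constr T P1; constr T P2; constr T Q1; constr T Q2;
     p = cmod (P2 - P1); q = cmod (Q2 - Q1); 0 < q; p \<le> q\<rbrakk>
     \<Longrightarrow> constr T (ray_point V A B ((p / q) * (pi / 2)))"
| RRA: "\<lbrakk>T = RRA_tool; constr T V; constr T A; constr T B; right_angle V A B;
     constr T C; C - V = of_real a * (A - V) + of_real b * (B - V); 0 < a; 0 < b;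
     constr T P; constr T Q\<rbrakk>
     \<Longrightarrow> constr T (P + of_real (2 * angle_at V A C / pi) * (Q - P))"

definition RA_constructible :: "real \<Rightarrow> bool" where
  "RA_constructible r \<longleftrightarrow>
     (\<exists>P Q. constr RA_tool P \<and> constr RA_tool Q \<and> \<bar>r\<bar> = cmod (P - Q))"

definition RRA_constructible :: "real \<Rightarrow> bool" where
  "RRA_constructible r \<longleftrightarrow>
     (\<exists>P Q. constr RRA_tool P \<and> constr RRA_tool Q \<and> \<bar>r\<bar> = cmod (P - Q))"

inductive_set RA_numbers :: "real set" where
  one: "1 \<in> RA_numbers"
| add: "x \<in> RA_numbers \<Longrightarrow> y \<in> RA_numbers \<Longrightarrow> x + y \<in> RA_numbers"
| diff: "x \<in> RA_numbers \<Longrightarrow> y \<in> RA_numbers \<Longrightarrow> x - y \<in> RA_numbers"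
| mult: "x \<in> RA_numbers \<Longrightarrow> y \<in> RA_numbers \<Longrightarrow> x * y \<in> RA_numbers"
| divide: "x \<in> RA_numbers \<Longrightarrow> y \<in> RA_numbers \<Longrightarrow> y \<noteq> 0 \<Longrightarrow> x / y \<in> RA_numbers"
| sqrt: "x \<in> RA_numbers \<Longrightarrow> 0 < x \<Longrightarrow> sqrt x \<in> RA_numbers"
| sin_pi: "x \<in> RA_numbers \<Longrightarrow> sin (pi * x) \<in> RA_numbers"

inductive_set RRA_numbers :: "real set" where
  one: "1 \<in> RRA_numbers"
| add: "x \<in> RRA_numbers \<Longrightarrow> y \<in> RRA_numbers \<Longrightarrow> x + y \<in> RRA_numbers"
| diff: "x \<in> RRA_numbers \<Longrightarrow> y \<in> RRA_numbers \<Longrightarrow> x - y \<in> RRA_numbers"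
| mult: "x \<in> RRA_numbers \<Longrightarrow> y \<in> RRA_numbers \<Longrightarrow> x * y \<in> RRA_numbers"
| divide: "x \<in> RRA_numbers \<Longrightarrow> y \<in> RRA_numbers \<Longrightarrow> y \<noteq> 0 \<Longrightarrow> x / y \<in> RRA_numbers"
| sqrt: "x \<in> RRA_numbers \<Longrightarrow> 0 < x \<Longrightarrow> sqrt x \<in> RRA_numbers"
| arcsin_pi: "x \<in> RRA_numbers \<Longrightarrow> \<bar>x\<bar> \<le> 1 \<Longrightarrow> arcsin x / pi \<in> RRA_numbers"

end

theory Submission
  imports Defs
begin

lemma cmod_eqI:
  "(Re u)^2 + (Im u)^2 = (Re v)^2 + (Im v)^2 \<Longrightarrow> cmod u = cmod v"
  by (simp add: cmod_def)

lemma c_refl: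
  assumes "constr T a" "constr T b" shows "constr T (2*b - a)"
proof (cases "a = b")
  case True then show ?thesis using assms by (simp add: algebra_simps)
next
  case False
  show ?thesis
  proof (rule constr.line_circle[of T a b b a])
    show "on_line a b (2 * b - a)" unfolding on_line_def
      by (rule exI[of _ 2]) (simp add: algebra_simps)
    show "on_circle b a (2 * b - a)" unfolding on_circle_def
      by (simp add: norm_minus_commute algebra_simps)
  qed (use assms False in simp_all)
qed

lemma c_neg: assumes "constr T a" shows "constr T (- a)"
  using c_refl[OF assms constr.zero] by simp

definition om :: complex where "om = Complex (1/2) (sqrt 3 / 2)"
definition om' :: complex where "om' = Complex (1/2) (- sqrt 3 / 2)"

lemma cmod_om: "cmod om = 1" "cmod (om - 1) = 1" "cmod om' = 1" "cmod (om' - 1) = 1"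
  by (simp_all add: om_def om'_def cmod_def power_divide)

lemma c_apex:
  assumes "constr T a" "constr T b" "a \<noteq> b"
  shows "constr T (a + (b - a) * om)" "constr T (a + (b - a) * om')"
proof -
  have nz: "cmod (b - a) = cmod (a - b)" by (simp add: norm_minus_commute)
  show "constr T (a + (b - a) * om)"
  proof (rule constr.circle_circle[of T a b b a])
    show "on_circle a b (a + (b - a) * om)" unfolding on_circle_def
      by (simp add: norm_mult cmod_om)
    have "a + (b - a) * om - b = (b - a) * (om - 1)" by (simp add: algebra_simps)
    then show "on_circle b a (a + (b - a) * om)" unfolding on_circle_def
      by (simp add: norm_mult cmod_om nz)
  qed (use assms in simp_all)
  show "constr T (a + (b - a) * om')"
  proof (rule constr.circle_circle[of T a b b a])
    show "on_circle a b (a + (b - a) * om')" unfolding on_circle_def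
      by (simp add: norm_mult cmod_om)
    have "a + (b - a) * om' - b = (b - a) * (om' - 1)" by (simp add: algebra_simps)
    then show "on_circle b a (a + (b - a) * om')" unfolding on_circle_def
      by (simp add: norm_mult cmod_om nz)
  qed (use assms in simp_all)
qed

lemma c_mid:
  assumes "constr T a" "constr T b" shows "constr T ((a + b) / 2)"
proof (cases "a = b")
  case True then show ?thesis using assms by simp
next
  case False
  let ?e1 = "a + (b - a) * om" and ?e2 = "a + (b - a) * om'"
  have ne: "?e1 \<noteq> ?e2" using False by (auto simp add: om_def om'_def complex_eq_iff)
  have n1: "\<not> on_line a b ?e1"
  proof
    assume "on_line a b ?e1"
    then obtain t where "?e1 = a + of_real t * (b - a)" unfolding on_line_def by blast
    then have "(b - a) * (om - of_real t) = 0" by (simp add: algebra_simps)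
    then have "om = of_real t" using False by simp
    then show False by (simp add: om_def complex_eq_iff)
  qed
  show ?thesis
  proof (rule constr.line_line[of T a b ?e1 ?e2])
    show "on_line a b ((a + b) / 2)" unfolding on_line_def
      by (rule exI[of _ "1/2"]) (simp add: field_simps)
    show "on_line ?e1 ?e2 ((a + b) / 2)" unfolding on_line_def
    proof (rule exI[of _ "1/2"])
      have "?e2 - ?e1 = (b - a) * (om' - om)" by (simp add: algebra_simps)
      moreover have "(a + b) / 2 - ?e1 = (b - a) * (1/2 - om)" by (simp add: field_simps)
      moreover have "1/2 - om = of_real (1/2) * (om' - om)"
        by (simp add: om_def om'_def complex_eq_iff)
      ultimately show "(a + b) / 2 = ?e1 + of_real (1/2) * (?e2 - ?e1)"
        by (metis (no_types, lifting) add_diff_cancel_left' diff_add_cancel mult.left_commute)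
    qed
  qed (use assms False ne n1 c_apex in simp_all)
qed

lemma c_add: assumes "constr T a" "constr T b" shows "constr T (a + b)"
proof -
  have "2 * ((a + b) / 2) - 0 = a + b" by simp
  then show ?thesis using c_refl[OF constr.zero c_mid[OF assms]] by metis
qed

lemma c_diff: assumes "constr T a" "constr T b" shows "constr T (a - b)"
  using c_add[OF assms(1) c_neg[OF assms(2)]] by simp

lemma c_cnj: assumes "constr T z" shows "constr T (cnj z)"
proof (cases "z = 0 \<or> z = 1")
  case True then show ?thesis using assms by auto
next
  case False
  show ?thesis
  proof (rule constr.circle_circle[of T 0 z 1 z])
    show "on_circle 0 z (cnj z)" unfolding on_circle_def by simp
    have "cnj z - 1 = cnj (z - 1)" by simp
    then show "on_circle 1 z (cnj z)" unfolding on_circle_def by (metis complex_mod_cnj)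
  qed (use assms False constr.zero constr.one in simp_all)
qed

lemma c_i: "constr T \<i>"
proof -
  have m: "(-1 + ((1 - (-1)) * om)) = \<i> * sqrt 3"
    unfolding om_def by (simp add: complex_eq_iff del: One_nat_def)
  have e: "constr T (\<i> * sqrt 3)"
    using c_apex(1)[OF c_neg[OF constr.one] constr.one] m by auto
  show ?thesis
  proof (rule constr.line_circle[of T 0 "\<i> * sqrt 3" 0 1])
    show "on_line 0 (\<i> * sqrt 3) \<i>" unfolding on_line_def
    proof (rule exI[of _ "1 / sqrt 3"])
      have "sqrt 3 \<noteq> 0" by simp
      then have "(1 / sqrt 3) * sqrt 3 = 1" by simp
      then show "\<i> = 0 + complex_of_real (1 / sqrt 3) * (\<i> * complex_of_real (sqrt 3) - 0)"
        by (simp add: complex_eq_iff)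
    qed
    show "on_circle 0 1 \<i>" unfolding on_circle_def by simp
  qed (use e constr.zero constr.one in simp_all)
qed

lemma c_rot: assumes "constr T (of_real x)" shows "constr T (\<i> * of_real x)"
proof (cases "x = 0")
  case True then show ?thesis using constr.zero by simp
next
  case False
  show ?thesis
  proof (rule constr.line_circle[of T 0 \<i> 0 "of_real x"])
    show "on_line 0 \<i> (\<i> * of_real x)" unfolding on_line_def
      by (rule exI[of _ x]) simp
    show "on_circle 0 (of_real x) (\<i> * of_real x)" unfolding on_circle_def by (simp add: norm_mult)
  qed (use assms False constr.zero c_i in simp_all)
qed

lemma c_unrot: assumes "constr T (\<i> * of_real x)" shows "constr T (of_real x)"
proof (cases "x = 0")
  case True then show ?thesis using constr.zero by simp
next
  case False
  show ?thesis
  proof (rule constr.line_circle[of T 0 1 0 "\<i> * of_real x"])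
    show "on_line 0 1 (of_real x)" unfolding on_line_def
      by (rule exI[of _ x]) simp
    show "on_circle 0 (\<i> * of_real x) (of_real x)" unfolding on_circle_def by (simp add: norm_mult)
  qed (use assms False constr.zero constr.one in simp_all)
qed

lemma c_Re: assumes "constr T z" shows "constr T (of_real (Re z))"
proof -
  have "(z + cnj z) / 2 = of_real (Re z)" by (simp add: complex_eq_iff)
  then show ?thesis using c_mid[OF assms c_cnj[OF assms]] by metis
qed

lemma c_Im: assumes "constr T z" shows "constr T (of_real (Im z))"
proof -
  have "(z + - cnj z) / 2 = \<i> * of_real (Im z)" by (simp add: complex_eq_iff)
  then show ?thesis using c_mid[OF assms c_neg[OF c_cnj[OF assms]]] c_unrot by metis
qed

lemma c_axis:
  assumes "constr T a" "constr T (a + d)" "Im d \<noteq> 0"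
  shows "constr T (a - of_real (Im a / Im d) * d)"
proof -
  have d0: "d \<noteq> 0" using assms(3) by auto
  have n: "\<not> (on_line a (a + d) 0 \<and> on_line a (a + d) 1)"
  proof
    assume "on_line a (a + d) 0 \<and> on_line a (a + d) 1"
    then obtain t s where h: "0 = a + of_real t * d" "1 = a + of_real s * d"
      unfolding on_line_def by auto
    have "(1::complex) - 0 = (a + of_real s * d) - (a + of_real t * d)" using h by simp
    then have "1 = of_real (s - t) * d" by (simp add: algebra_simps)
    then have "Re 1 = Re (of_real (s - t) * d)" "Im 1 = Im (of_real (s - t) * d)" by simp_all
    then show False using assms(3) by simp
  qed
  let ?z = "a - of_real (Im a / Im d) * d"
  have im: "Im ?z = 0" using assms(3) by simp
  show ?thesis
  proof (rule constr.line_line[of T a "a + d" 0 1])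
    show "on_line a (a + d) ?z" unfolding on_line_def
      by (rule exI[of _ "- (Im a / Im d)"]) simp
    show "on_line 0 1 ?z" unfolding on_line_def
      by (rule exI[of _ "Re ?z"]) (use im in \<open>simp add: complex_eq_iff\<close>)
  qed (use assms d0 n constr.zero constr.one in simp_all)
qed

lemma c_mult:
  assumes "constr T (of_real x)" "constr T (of_real y)"
  shows "constr T (of_real (x * y))"
proof -
  have a: "constr T (\<i> * of_real x)" by (rule c_rot[OF assms(1)])
  have b: "constr T (\<i> * of_real x + (of_real y - \<i>))"
    by (intro c_add c_diff a assms c_i)
  have "\<i> * of_real x - of_real (Im (\<i> * of_real x) / Im (of_real y - \<i>)) * (of_real y - \<i>)
        = of_real (x * y)" by (simp add: complex_eq_iff)
  then show ?thesis using c_axis[OF a b] by simp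
qed

lemma c_div:
  assumes "constr T (of_real x)" "constr T (of_real y)" "y \<noteq> 0"
  shows "constr T (of_real (x / y))"
proof -
  have b: "constr T (\<i> + (of_real x - \<i> * of_real y))"
    by (intro c_add c_diff c_rot assms c_i)
  have "\<i> - of_real (Im \<i> / Im (of_real x - \<i> * of_real y)) * (of_real x - \<i> * of_real y)
        = of_real (x / y)" using assms(3) by (simp add: complex_eq_iff field_simps)
  then show ?thesis using c_axis[OF c_i b] assms(3) by simp
qed

lemma c_sqrt:
  assumes "constr T (of_real x)" "0 < x"
  shows "constr T (of_real (sqrt x))"
proof -
  have c: "constr T ((of_real x + - 1) / 2)" by (intro c_mid assms c_neg constr.one)
  have "constr T (\<i> * of_real (sqrt x))"
  proof (rule constr.line_circle[of T 0 \<i> "(of_real x + - 1) / 2" "of_real x"])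
    show "on_line 0 \<i> (\<i> * of_real (sqrt x))" unfolding on_line_def
      by (rule exI[of _ "sqrt x"]) simp
    show "on_circle ((of_real x + - 1) / 2) (of_real x) (\<i> * of_real (sqrt x))"
      unfolding on_circle_def
      by (rule cmod_eqI) (use assms(2) in \<open>simp add: power2_eq_square field_simps\<close>)
    show "(of_real x + - 1) / 2 \<noteq> (of_real x :: complex)"
      using assms(2) by (simp add: complex_eq_iff field_simps)
  qed (use assms c constr.zero c_i in simp_all)
  then show ?thesis by (rule c_unrot)
qed

lemma c_int: "constr T (of_int n)"
proof (induction n rule: int_induct[where k=0])
  case base then show ?case using constr.zero by simp
next
  case (step1 i) then show ?case using c_add[OF _ constr.one] by (metis of_int_add of_int_1)
next
  case (step2 i) then show ?case using c_diff[OF _ constr.one] by (metis of_int_diff of_int_1)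
qed

lemma c_one': "constr T (of_real 1)" using constr.one by simp
lemma c_two: "constr T (of_real 2)" using c_add[OF constr.one constr.one] by simp

lemma ra01: "right_angle 0 1 \<i>" unfolding right_angle_def by simp

lemma c_sin_half:
  assumes T: "T = RA_tool" and c: "constr T (of_real y)" and y: "0 \<le> y" "y \<le> 1/2"
  shows "constr T (of_real (sin (pi * y)))"
proof -
  have c2: "constr T (of_real (2 * y))"
    using c_add[OF c c] by (metis mult_2 of_real_add)
  have "constr T (ray_point 0 1 \<i> ((2 * y / 1) * (pi / 2)))"
    by (rule constr.RA[OF T constr.zero constr.one c_i ra01 constr.zero c2 constr.zero constr.one])
       (use y in simp_all)
  then have "constr T (of_real (Im (ray_point 0 1 \<i> ((2 * y / 1) * (pi / 2)))))" by (rule c_Im)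
  moreover have "Im (ray_point 0 1 \<i> ((2 * y / 1) * (pi / 2))) = sin (pi * y)"
    unfolding ray_point_def by (simp add: mult.commute)
  ultimately show ?thesis by simp
qed

lemma c_sin:
  assumes T: "T = RA_tool" and c: "constr T (of_real x)"
  shows "constr T (of_real (sin (pi * x)))"
proof -
  define n where "n = floor x"
  define y where "y = x - of_int n"
  have y: "0 \<le> y" "y < 1" unfolding y_def n_def by linarith+
  have cy: "constr T (of_real y)" unfolding y_def using c_diff[OF c c_int[of T n]] by simp
  have sy: "constr T (of_real (sin (pi * y)))"
  proof (cases "y \<le> 1/2")
    case True then show ?thesis using c_sin_half[OF T cy y(1)] by simp
  next
    case False
    have "constr T (of_real (1 - y))" using c_diff[OF constr.one cy] by simp
    then have "constr T (of_real (sin (pi * (1 - y))))"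
      by (rule c_sin_half[OF T]) (use False y in simp_all)
    moreover have "sin (pi * (1 - y)) = sin (pi * y)"
      by (simp add: right_diff_distrib)
    ultimately show ?thesis by simp
  qed
  have "sin (pi * x) = sin (pi * y + pi * of_int n)" unfolding y_def by (simp add: algebra_simps)
  also have "\<dots> = sin (pi * y) * (if even n then 1 else -1)" by (simp add: sin_add)
  finally show ?thesis using sy c_neg[OF sy] by (cases "even n") simp_all
qed

lemma c_asin_pos:
  assumes T: "T = RRA_tool" and c: "constr T (of_real x)" and x: "0 < x" "x < 1"
  shows "constr T (of_real (2 * arcsin x / pi))"
proof -
  define a where "a = sqrt (1 - x^2)"
  have a: "0 < a" unfolding a_def using x by (simp add: power_less_one_iff abs_square_less_1)
  have ca: "constr T (of_real a)" unfolding a_def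
    by (rule c_sqrt) (use c_diff[OF constr.one c_mult[OF c c]] x in \<open>simp_all add: power2_eq_square abs_square_less_1 flip: power2_eq_square\<close>)
  let ?C = "of_real a + \<i> * of_real x"
  have cC: "constr T ?C" by (intro c_add ca c_rot c)
  have "constr T (0 + of_real (2 * angle_at 0 1 ?C / pi) * (1 - 0))"
    by (rule constr.RRA[OF T constr.zero constr.one c_i ra01 cC _ a x(1) constr.zero constr.one])
       simp
  moreover have "angle_at 0 1 ?C = arcsin x"
  proof -
    have "cmod ?C = 1" unfolding cmod_def a_def using x by (simp add: abs_square_less_1 less_imp_le)
    then have "angle_at 0 1 ?C = arccos a" unfolding angle_at_def by simp
    then show ?thesis unfolding a_def using arcsin_arccos_sqrt_pos[of x] x by simp
  qed
  ultimately show ?thesis by simp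
qed

lemma c_asin:
  assumes T: "T = RRA_tool" and c: "constr T (of_real x)" and x: "\<bar>x\<bar> \<le> 1"
  shows "constr T (of_real (arcsin x / pi))"
proof -
  have pos: "constr T (of_real (arcsin y / pi))" if h: "0 \<le> y" "y \<le> 1" "constr T (of_real y)" for y
  proof -
    consider "y = 0" | "y = 1" | "0 < y" "y < 1" using h by linarith
    then show ?thesis
    proof cases
      case 1 then show ?thesis using constr.zero by simp
    next
      case 2 then show ?thesis using c_div[OF c_one' c_two] by simp
    next
      case 3
      have "constr T (of_real (2 * arcsin y / pi / 2))"
        using c_div[OF c_asin_pos[OF T h(3) 3] c_two] by simp
      then show ?thesis by simp
    qed
  qed
  show ?thesis
  proof (cases "0 \<le> x")
    case True then show ?thesis using pos c x by simp
  next
    case False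
    have "constr T (of_real (arcsin (- x) / pi))" using pos[of "-x"] c_neg[OF c] False x by simp
    then have "constr T (- of_real (arcsin (- x) / pi))" by (rule c_neg)
    moreover have "arcsin (- x) = - arcsin x" using x by (simp add: arcsin_minus)
    ultimately show ?thesis by simp
  qed
qed

definition fieldK :: "real set \<Rightarrow> bool" where
  "fieldK K \<longleftrightarrow> 1 \<in> K \<and> (\<forall>x\<in>K. \<forall>y\<in>K. x + y \<in> K \<and> x - y \<in> K \<and> x * y \<in> K \<and> (y \<noteq> 0 \<longrightarrow> x / y \<in> K))
     \<and> (\<forall>x\<in>K. 0 < x \<longrightarrow> sqrt x \<in> K)"

context
  fixes K assumes F: "fieldK K"
begin

lemma K1: "1 \<in> K" using F unfolding fieldK_def by blast
lemma Kadd: "x \<in> K \<Longrightarrow> y \<in> K \<Longrightarrow> x + y \<in> K" using F unfolding fieldK_def by blast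
lemma Kdiff: "x \<in> K \<Longrightarrow> y \<in> K \<Longrightarrow> x - y \<in> K" using F unfolding fieldK_def by blast
lemma Kmult: "x \<in> K \<Longrightarrow> y \<in> K \<Longrightarrow> x * y \<in> K" using F unfolding fieldK_def by blast
lemma K0: "0 \<in> K" using Kdiff[OF K1 K1] by simp
lemma Kdiv: "x \<in> K \<Longrightarrow> y \<in> K \<Longrightarrow> x / y \<in> K"
  using F K0 unfolding fieldK_def by (cases "y = 0") auto
lemma Kneg: "x \<in> K \<Longrightarrow> - x \<in> K" using Kdiff[OF K0] by fastforce
lemma Ksqrt: "x \<in> K \<Longrightarrow> sqrt x \<in> K"
proof -
  assume x: "x \<in> K"
  consider "x = 0" | "0 < x" | "x < 0" by linarith
  then show ?thesis
  proof cases
    case 3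
    have "sqrt (-x) \<in> K" using F Kneg[OF x] 3 unfolding fieldK_def by auto
    then show ?thesis using Kneg[of "- sqrt x"] by (simp add: real_sqrt_minus)
  qed (use F K0 x in \<open>auto simp: fieldK_def\<close>)
qed
lemma Kpow2: "x \<in> K \<Longrightarrow> x^2 \<in> K" by (simp add: power2_eq_square Kmult)
lemma Ksq: "w^2 \<in> K \<Longrightarrow> w \<in> K"
proof -
  assume "w^2 \<in> K"
  then have "\<bar>w\<bar> \<in> K" using Ksqrt by fastforce
  then show "w \<in> K" using Kneg[of "\<bar>w\<bar>"] by (cases "0 \<le> w") auto
qed
lemma Kcmod: "Re z \<in> K \<Longrightarrow> Im z \<in> K \<Longrightarrow> cmod z \<in> K"
  unfolding cmod_def by (intro Ksqrt Kadd Kpow2)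

lemma K2: "2 \<in> K" using Kadd[OF K1 K1] by simp
lemmas Kops = K0 K1 Kadd Kdiff Kmult Kdiv Kneg Kpow2

lemma K_ll:
  assumes K: "Re a \<in> K" "Im a \<in> K" "Re b \<in> K" "Im b \<in> K" "Re c \<in> K" "Im c \<in> K" "Re d \<in> K" "Im d \<in> K"
    and ab: "a \<noteq> b" and nl: "\<not> (on_line a b c \<and> on_line a b d)"
    and z1: "on_line a b z" and z2: "on_line c d z"
  shows "Re z \<in> K \<and> Im z \<in> K"
proof -
  obtain t where t: "z = a + of_real t * (b - a)" using z1 unfolding on_line_def by blast
  obtain s where s: "z = c + of_real s * (d - c)" using z2 unfolding on_line_def by blast
  define ru iu rv iv where "ru = Re b - Re a" "iu = Im b - Im a" "rv = Re d - Re c" "iv = Im d - Im c"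
  have e1: "Re a + t * ru = Re c + s * rv" using arg_cong[OF trans[OF t[symmetric] s], of Re]
    unfolding ru_iu_rv_iv_def by simp
  have e2: "Im a + t * iu = Im c + s * iv" using arg_cong[OF trans[OF t[symmetric] s], of Im]
    unfolding ru_iu_rv_iv_def by simp
  define D where "D = ru * iv - iu * rv"
  have tD: "t * D = (Re c - Re a) * iv - (Im c - Im a) * rv"
    unfolding D_def using e1 e2 by algebra
  show ?thesis
  proof (cases "D = 0")
    case False
    then have "t = ((Re c - Re a) * iv - (Im c - Im a) * rv) / D" using tD by (simp add: field_simps)
    then have tK: "t \<in> K" unfolding D_def ru_iu_rv_iv_def using K by (simp add: Kops)
    have "Re z = Re a + t * (Re b - Re a)" "Im z = Im a + t * (Im b - Im a)" using t by simp_all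
    then show ?thesis using K tK by (simp add: Kops)
  next
    case True
    define N where "N = ru^2 + iu^2"
    have N: "N \<noteq> 0" unfolding N_def ru_iu_rv_iv_def using ab by (auto simp: complex_eq_iff)
    define l where "l = (rv * ru + iv * iu) / N"
    have "rv * N = l * N * ru" "iv * N = l * N * iu" unfolding l_def N_def using N True
      unfolding D_def N_def by (simp_all add: field_simps power2_eq_square) algebra+
    then have v: "rv = l * ru" "iv = l * iu" using N by simp_all
    have "Re c = Re a + (t - s * l) * (Re b - Re a)" "Im c = Im a + (t - s * l) * (Im b - Im a)"
      "Re d = Re a + (t - s * l + l) * (Re b - Re a)" "Im d = Im a + (t - s * l + l) * (Im b - Im a)"
      using e1 e2 v unfolding ru_iu_rv_iv_def by algebra+
    then have "c = a + of_real (t - s * l) * (b - a)" "d = a + of_real (t - s * l + l) * (b - a)"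
      by (simp_all add: complex_eq_iff)
    then have "on_line a b c" "on_line a b d" unfolding on_line_def by blast+
    then show ?thesis using nl by blast
  qed
qed

lemma K_lc:
  assumes K: "Re a \<in> K" "Im a \<in> K" "Re b \<in> K" "Im b \<in> K" "Re c \<in> K" "Im c \<in> K" "Re d \<in> K" "Im d \<in> K"
    and ab: "a \<noteq> b" and z1: "on_line a b z" and z2: "on_circle c d z"
  shows "Re z \<in> K \<and> Im z \<in> K"
proof -
  obtain t where t: "z = a + of_real t * (b - a)" using z1 unfolding on_line_def by blast
  define ru iu X0 Y0 R where "ru = Re b - Re a" "iu = Im b - Im a" "X0 = Re a - Re c" "Y0 = Im a - Im c"
    "R = (Re d - Re c)^2 + (Im d - Im c)^2"
  have "(cmod (z - c))^2 = (cmod (d - c))^2" using z2 unfolding on_circle_def by simp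
  then have ce: "(X0 + t * ru)^2 + (Y0 + t * iu)^2 = R"
    unfolding cmod_power2 ru_iu_X0_Y0_R_def using t by (simp add: algebra_simps)
  define A B C where "A = ru^2 + iu^2" "B = ru * X0 + iu * Y0" "C = X0^2 + Y0^2 - R"
  have A: "A \<noteq> 0" unfolding A_B_C_def ru_iu_X0_Y0_R_def using ab by (auto simp: complex_eq_iff)
  have "(A * t + B)^2 - (B^2 - A * C) = A * ((X0 + t * ru)^2 + (Y0 + t * iu)^2 - R)"
    unfolding A_B_C_def by (simp add: power2_eq_square algebra_simps)
  then have "(A * t + B)^2 = B^2 - A * C" using ce by simp
  moreover have "B^2 - A * C \<in> K" unfolding A_B_C_def ru_iu_X0_Y0_R_def using K by (simp add: Kops)
  ultimately have "A * t + B \<in> K" using Ksq by simp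
  moreover have "A \<in> K" "B \<in> K" unfolding A_B_C_def ru_iu_X0_Y0_R_def using K by (simp_all add: Kops)
  ultimately have "(A * t + B - B) / A \<in> K" by (intro Kdiv Kdiff)
  then have tK: "t \<in> K" using A by simp
  have "Re z = Re a + t * (Re b - Re a)" "Im z = Im a + t * (Im b - Im a)" using t by simp_all
  then show ?thesis using K tK by (simp add: Kops)
qed

lemma K_cc:
  assumes K: "Re c \<in> K" "Im c \<in> K" "Re d \<in> K" "Im d \<in> K" "Re c' \<in> K" "Im c' \<in> K" "Re d' \<in> K" "Im d' \<in> K"
    and cc: "c \<noteq> c' \<or> cmod (d - c) \<noteq> cmod (d' - c')"
    and z1: "on_circle c d z" and z2: "on_circle c' d' z"
  shows "Re z \<in> K \<and> Im z \<in> K"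
proof -
  have cc': "c \<noteq> c'" using cc z1 z2 unfolding on_circle_def by auto
  define X Y dx dy R R' where "X = Re z - Re c" "Y = Im z - Im c" "dx = Re c' - Re c" "dy = Im c' - Im c"
    "R = (Re d - Re c)^2 + (Im d - Im c)^2" "R' = (Re d' - Re c')^2 + (Im d' - Im c')^2"
  have "(cmod (z - c))^2 = (cmod (d - c))^2" using z1 unfolding on_circle_def by simp
  then have e1: "X^2 + Y^2 = R" unfolding cmod_power2 X_Y_dx_dy_R_R'_def by simp
  have "(cmod (z - c'))^2 = (cmod (d' - c'))^2" using z2 unfolding on_circle_def by simp
  then have e2: "(X - dx)^2 + (Y - dy)^2 = R'" unfolding cmod_power2 X_Y_dx_dy_R_R'_def
    by (simp add: algebra_simps)
  define N u w where "N = dx^2 + dy^2" "u = X * dx + Y * dy" "w = Y * dx - X * dy"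
  have N: "N \<noteq> 0" unfolding N_u_w_def X_Y_dx_dy_R_R'_def using cc' by (auto simp: complex_eq_iff)
  have NK: "N \<in> K" "dx \<in> K" "dy \<in> K" "R \<in> K" "R' \<in> K"
    unfolding N_u_w_def X_Y_dx_dy_R_R'_def using K by (simp_all add: Kops)
  have "(X^2 + Y^2) - ((X - dx)^2 + (Y - dy)^2) = 2 * u - N"
    unfolding N_u_w_def by (simp add: power2_eq_square algebra_simps)
  then have "u = (R - R' + N) / 2" using e1 e2 by simp
  moreover have "(R - R' + N) / 2 \<in> K" using NK K2 by (intro Kdiv Kadd Kdiff)
  ultimately have uK: "u \<in> K" by metis
  have "w^2 = (X^2 + Y^2) * N - u^2" unfolding N_u_w_def by (simp add: power2_eq_square algebra_simps)
  then have "w^2 = R * N - u^2" using e1 by simp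
  then have wK: "w \<in> K" using Ksq uK NK by (simp add: Kops)
  have "X * N = u * dx - w * dy" "Y * N = u * dy + w * dx" unfolding N_u_w_def by algebra+
  then have "X = (u * dx - w * dy) / N" "Y = (u * dy + w * dx) / N" using N by (simp_all add: field_simps)
  then have "X \<in> K" "Y \<in> K" using uK wK NK by (simp_all add: Kops)
  then have "X + Re c \<in> K" "Y + Im c \<in> K" using K by (simp_all add: Kops)
  then show ?thesis unfolding X_Y_dx_dy_R_R'_def by simp
qed

lemma K_RA:
  assumes S: "\<forall>x\<in>K. sin (pi * x) \<in> K"
    and K: "Re V \<in> K" "Im V \<in> K" "Re A \<in> K" "Im A \<in> K" "Re B \<in> K" "Im B \<in> K"
    and pK: "p \<in> K" and qK: "q \<in> K"
  shows "Re (ray_point V A B ((p / q) * (pi / 2))) \<in> K \<and> Im (ray_point V A B ((p / q) * (pi / 2))) \<in> K"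
proof -
  let ?th = "(p / q) * (pi / 2)"
  have h: "p / q / 2 \<in> K" using pK qK K2 by (intro Kdiv)
  have "sin (pi * (p / q / 2)) \<in> K" using S h by blast
  moreover have "sin (pi * (p / q / 2)) = sin ?th" by (simp add: algebra_simps)
  ultimately have sK: "sin ?th \<in> K" by simp
  have h2: "1 / 2 - p / q / 2 \<in> K" using Kdiff[OF Kdiv[OF K1 K2] h] .
  have "sin (pi * (1 / 2 - p / q / 2)) \<in> K" using S h2 by blast
  moreover have "sin (pi * (1 / 2 - p / q / 2)) = cos ?th" by (simp add: cos_sin_eq algebra_simps)
  ultimately have cK: "cos ?th \<in> K" by simp
  have mA: "cmod (A - V) \<in> K" "cmod (B - V) \<in> K" using K by (simp_all add: Kcmod Kops)
  show ?thesis unfolding ray_point_def using K sK cK mA by (simp add: Kops)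
qed

lemma K_RRA:
  assumes S: "\<forall>x\<in>K. \<bar>x\<bar> \<le> 1 \<longrightarrow> arcsin x / pi \<in> K"
    and K: "Re V \<in> K" "Im V \<in> K" "Re A \<in> K" "Im A \<in> K" "Re C \<in> K" "Im C \<in> K"
      "Re P \<in> K" "Im P \<in> K" "Re Q \<in> K" "Im Q \<in> K"
  shows "Re (P + of_real (2 * angle_at V A C / pi) * (Q - P)) \<in> K \<and>
         Im (P + of_real (2 * angle_at V A C / pi) * (Q - P)) \<in> K"
proof -
  define w where "w = Re ((C - V) * cnj (A - V)) / (cmod (C - V) * cmod (A - V))"
  have r: "Re ((C - V) * cnj (A - V)) = (Re C - Re V)*(Re A - Re V) + (Im C - Im V)*(Im A - Im V)"
    by (simp add: algebra_simps)
  have rK: "(Re C - Re V)*(Re A - Re V) + (Im C - Im V)*(Im A - Im V) \<in> K"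
    using K by (intro Kadd Kmult Kdiff)
  have m1: "cmod (C - V) \<in> K" by (rule Kcmod) (use K in \<open>simp_all add: Kdiff\<close>)
  have m2: "cmod (A - V) \<in> K" by (rule Kcmod) (use K in \<open>simp_all add: Kdiff\<close>)
  have wK: "w \<in> K" unfolding w_def r using rK m1 m2 by (intro Kdiv Kmult)
  have w1: "\<bar>w\<bar> \<le> 1"
  proof (cases "cmod (C - V) * cmod (A - V) = 0")
    case True then show ?thesis unfolding w_def True by simp
  next
    case False
    have "\<bar>Re ((C - V) * cnj (A - V))\<bar> \<le> cmod (C - V) * cmod (A - V)"
      using abs_Re_le_cmod[of "(C - V) * cnj (A - V)"] by (simp only: norm_mult complex_mod_cnj)
    moreover have "0 < cmod (C - V) * cmod (A - V)" using False by simp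
    ultimately have "\<bar>Re ((C - V) * cnj (A - V))\<bar> / (cmod (C - V) * cmod (A - V)) \<le> 1"
      by (simp only: divide_le_eq_1) simp
    then show ?thesis unfolding w_def abs_divide using \<open>0 < cmod (C - V) * cmod (A - V)\<close> by simp
  qed
  have "arcsin w / pi \<in> K" using S wK w1 by blast
  then have tK: "1 - 2 * (arcsin w / pi) \<in> K" using K1 K2 by (intro Kdiff Kmult)
  have aw: "angle_at V A C = arccos w" unfolding angle_at_def w_def by (rule refl)
  have "arccos w = pi / 2 - arcsin w" using w1 by (intro arccos_arcsin_eq) linarith+
  then have "2 * angle_at V A C / pi = 2 * (pi / 2 - arcsin w) / pi" using aw by simp
  also have "\<dots> = 1 - 2 * (arcsin w / pi)" using pi_gt_zero by (simp add: field_simps)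
  finally have "2 * angle_at V A C / pi = 1 - 2 * (arcsin w / pi)" .
  then have gK: "2 * angle_at V A C / pi \<in> K" using tK by simp
  define g where "g = 2 * angle_at V A C / pi"
  have gK': "g \<in> K" using gK unfolding g_def .
  have e: "Re (P + of_real g * (Q - P)) = Re P + g * (Re Q - Re P)"
     "Im (P + of_real g * (Q - P)) = Im P + g * (Im Q - Im P)"
    by simp_all
  show ?thesis unfolding g_def[symmetric] e using K gK' by (intro conjI Kadd Kmult Kdiff)
qed

end


lemma constr_K:
  assumes "constr T z" and F: "fieldK K"
    and hRA: "T = RA_tool \<Longrightarrow> \<forall>x\<in>K. sin (pi * x) \<in> K"
    and hRRA: "T = RRA_tool \<Longrightarrow> \<forall>x\<in>K. \<bar>x\<bar> \<le> 1 \<longrightarrow> arcsin x / pi \<in> K"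
  shows "Re z \<in> K \<and> Im z \<in> K"
  using assms(1)
proof induction
  case zero then show ?case using K0[OF F] by simp
next
  case one then show ?case using K0[OF F] K1[OF F] by simp
next
  case (line_line a b c d z) show ?case by (rule K_ll[OF F, of a b c d]) (use line_line in simp_all)
next
  case (line_circle a b c d z) show ?case by (rule K_lc[OF F, of a b c d]) (use line_circle in simp_all)
next
  case (circle_circle c d c' d' z) show ?case by (rule K_cc[OF F, of c d c' d']) (use circle_circle in simp_all)
next
  case (RA V A B P1 P2 Q1 Q2 p q)
  have "p \<in> K" "q \<in> K" using RA by (simp_all add: Kcmod[OF F] Kdiff[OF F])
  then show ?case using RA by (intro K_RA[OF F hRA[OF RA(1)]]) simp_all
next
  case (RRA V A B C a b P Q)
  then show ?case by (intro K_RRA[OF F hRRA[OF RRA(1)]]) simp_all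
qed


lemma RA_fwd: "x \<in> RA_numbers \<Longrightarrow> constr RA_tool (of_real x)"
proof (induction rule: RA_numbers.induct)
  case one then show ?case by (rule c_one')
next
  case (add x y) then show ?case using c_add by fastforce
next
  case (diff x y) then show ?case using c_diff by fastforce
next
  case (mult x y) then show ?case using c_mult by blast
next
  case (divide x y) then show ?case using c_div by blast
next
  case (sqrt x) then show ?case using c_sqrt by blast
next
  case (sin_pi x) then show ?case by (intro c_sin) simp_all
qed

lemma RRA_fwd: "x \<in> RRA_numbers \<Longrightarrow> constr RRA_tool (of_real x)"
proof (induction rule: RRA_numbers.induct)
  case one then show ?case by (rule c_one')
next
  case (add x y) then show ?case using c_add by fastforce
next
  case (diff x y) then show ?case using c_diff by fastforce
next
  case (mult x y) then show ?case using c_mult by blast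
next
  case (divide x y) then show ?case using c_div by blast
next
  case (sqrt x) then show ?case using c_sqrt by blast
next
  case (arcsin_pi x) then show ?case by (intro c_asin) simp_all
qed

lemma fieldK_RA: "fieldK RA_numbers"
  unfolding fieldK_def by (auto intro: RA_numbers.intros)

lemma fieldK_RRA: "fieldK RRA_numbers"
  unfolding fieldK_def by (auto intro: RRA_numbers.intros)

lemma back_K:
  assumes F: "fieldK K" and P: "Re P \<in> K \<and> Im P \<in> K" and Q: "Re Q \<in> K \<and> Im Q \<in> K"
    and r: "\<bar>r\<bar> = cmod (P - Q)"
  shows "r \<in> K"
proof -
  have "cmod (P - Q) \<in> K" using P Q by (intro Kcmod[OF F]) (simp_all add: Kdiff[OF F])
  then have a: "\<bar>r\<bar> \<in> K" using r by simp
  show ?thesis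
  proof (cases "0 \<le> r")
    case True then show ?thesis using a by simp
  next
    case False then show ?thesis using Kneg[OF F a] by simp
  qed
qed

theorem theorem7p2:
  shows "(\<forall>r::real. RA_constructible r \<longleftrightarrow> r \<in> RA_numbers) \<and>
         (\<forall>r::real. RRA_constructible r \<longleftrightarrow> r \<in> RRA_numbers)"
proof (intro conjI allI iffI)
  fix r
  assume "RA_constructible r"
  then obtain P Q where PQ: "constr RA_tool P" "constr RA_tool Q" "\<bar>r\<bar> = cmod (P - Q)"
    unfolding RA_constructible_def by blast
  have "Re P \<in> RA_numbers \<and> Im P \<in> RA_numbers" "Re Q \<in> RA_numbers \<and> Im Q \<in> RA_numbers"
    using constr_K[OF PQ(1) fieldK_RA] constr_K[OF PQ(2) fieldK_RA] by (auto intro: RA_numbers.intros)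
  then show "r \<in> RA_numbers" using back_K[OF fieldK_RA _ _ PQ(3)] by blast
next
  fix r
  assume "r \<in> RA_numbers"
  then show "RA_constructible r" unfolding RA_constructible_def
    using RA_fwd constr.zero by fastforce
next
  fix r
  assume "RRA_constructible r"
  then obtain P Q where PQ: "constr RRA_tool P" "constr RRA_tool Q" "\<bar>r\<bar> = cmod (P - Q)"
    unfolding RRA_constructible_def by blast
  have "Re P \<in> RRA_numbers \<and> Im P \<in> RRA_numbers" "Re Q \<in> RRA_numbers \<and> Im Q \<in> RRA_numbers"
    using constr_K[OF PQ(1) fieldK_RRA] constr_K[OF PQ(2) fieldK_RRA] by (auto intro: RRA_numbers.intros)
  then show "r \<in> RRA_numbers" using back_K[OF fieldK_RRA _ _ PQ(3)] by blast
next
  fix r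
  assume "r \<in> RRA_numbers"
  then show "RRA_constructible r" unfolding RRA_constructible_def
    using RRA_fwd constr.zero by fastforce
qed

end
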